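(* Let $p$ be a prime number, let $G\simeq C_2\oplus C_{2p}$, and let $f$ be an automorphism of $\mathcal{P}_{0}(G)$ with trivial pullback. Then $f$ is the identity.
   Context: For an additively written finite abelian group $G$, $\mathcal{P}_{0}(G)$ is the monoid of all subsets of $G$ containing $0$, with setwise addition and identity $\{0\}$. An automorphism $f$ of $\mathcal{P}_0(G)$ has trivial pullback if $f(\{0,a\})=\{0,a\}$ for all $a\in G$. $C_n$ denotes the cyclic group of order $n$. *)

theory Defs
  imports Main "HOL-Computational_Algebra.Primes"
begin

definition P0 :: "'a::ab_group_add set set" where
  "P0 = {A. (0::'a) \<in> A}"

definition setadd :: "'a::ab_group_add set \<Rightarrow> 'a set \<Rightarrow> 'a set" where
  "setadd A B = {a + b | a b. a \<in> A \<and> b \<in> B}"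

definition P0_automorphism :: "('a::ab_group_add set \<Rightarrow> 'a set) \<Rightarrow> bool" where
  "P0_automorphism f \<longleftrightarrow>
     bij_betw f P0 P0 \<and>
     (\<forall>A\<in>P0. \<forall>B\<in>P0. f (setadd A B) = setadd (f A) (f B)) \<and>
     f {0} = {0}"

definition trivial_pullback :: "('a::ab_group_add set \<Rightarrow> 'a set) \<Rightarrow> bool" where
  "trivial_pullback f \<longleftrightarrow> (\<forall>a::'a. f {0, a} = {0, a})"

definition iso_to_CmCn :: "nat \<Rightarrow> nat \<Rightarrow> ('a::ab_group_add \<Rightarrow> nat \<times> nat) \<Rightarrow> bool" where
  "iso_to_CmCn m n h \<longleftrightarrow>
     bij_betw h UNIV ({0..<m} \<times> {0..<n}) \<and>
     (\<forall>x y. h (x + y) = ((fst (h x) + fst (h y)) mod m, (snd (h x) + snd (h y)) mod n))"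

end

theory Submission
  imports Defs
begin

definition tr :: "'a::ab_group_add \<Rightarrow> 'a set \<Rightarrow> 'a set" where
  "tr c A = (\<lambda>b. b + c) ` A"

definition stab :: "'a::ab_group_add set \<Rightarrow> 'a set" where
  "stab A = {a. \<forall>b\<in>A. b + a \<in> A}"

lemma mem_tr: "z \<in> tr c A \<longleftrightarrow> z - c \<in> A"
  unfolding tr_def by (auto simp: image_iff) (metis diff_add_cancel)

lemma setadd_pair: "setadd A {0,a} = A \<union> tr a A"
  unfolding setadd_def tr_def by (auto; force)

lemma stab_0: "(0::'a::ab_group_add) \<in> stab A" unfolding stab_def by simp

lemma stab_add: assumes "a \<in> stab A" "b \<in> stab A" shows "a + b \<in> stab A"
  unfolding stab_def
proof (intro CollectI ballI)
  fix c assume "c \<in> A"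
  then have "c + a \<in> A" using assms(1) unfolding stab_def by blast
  then have "(c + a) + b \<in> A" using assms(2) unfolding stab_def by blast
  then show "c + (a + b) \<in> A" by (simp add: add.assoc)
qed

lemma stab_mem: "a \<in> stab A \<Longrightarrow> b \<in> A \<Longrightarrow> b + a \<in> A"
  unfolding stab_def by auto

lemma stab_neg:
  assumes fin: "finite (UNIV::'a::ab_group_add set)" and a: "a \<in> stab (A::'a set)"
  shows "-a \<in> stab A"
proof -
  have fA: "finite A" by (rule finite_subset[OF subset_UNIV fin])
  have sub: "(\<lambda>b. b + a) ` A \<subseteq> A" using a by (auto simp: stab_def)
  have "inj_on (\<lambda>b. b + a) A" by (auto simp: inj_on_def)
  then have "card ((\<lambda>b. b + a) ` A) = card A" by (simp add: card_image)
  then have eq: "(\<lambda>b. b + a) ` A = A" using sub fA by (simp add: card_subset_eq)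
  show ?thesis unfolding stab_def
  proof (safe)
    fix b assume "b \<in> A"
    then obtain b' where "b' \<in> A" "b = b' + a" using eq by blast
    then show "b + - a \<in> A" by simp
  qed
qed

lemma stab_diff:
  assumes fin: "finite (UNIV::'a::ab_group_add set)" and "a \<in> stab (A::'a set)" "b \<in> stab A"
  shows "a - b \<in> stab A"
  using stab_add[OF assms(2) stab_neg[OF fin assms(3)]] by simp

lemma pair_stab: "A \<union> tr a A = A \<longleftrightarrow> a \<in> stab A"
  unfolding stab_def tr_def by auto

lemma stab_closed:
  assumes "0 \<in> K" "\<And>a b. a \<in> K \<Longrightarrow> b \<in> K \<Longrightarrow> a + b \<in> K"
  shows "stab K = K"
  unfolding stab_def using assms by force

lemma stab_stab: "stab (stab A) = stab A"
  by (rule stab_closed[OF stab_0 stab_add])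

lemma divis:
  assumes "0 \<in> X" "\<forall>g\<in>B. \<exists>t\<in>X. tr (g - t) X \<subseteq> B"
  shows "setadd {c. tr c X \<subseteq> B} X = B"
proof
  show "setadd {c. tr c X \<subseteq> B} X \<subseteq> B"
    unfolding setadd_def tr_def by (auto simp: add.commute)
  show "B \<subseteq> setadd {c. tr c X \<subseteq> B} X"
  proof
    fix g assume "g \<in> B"
    then obtain t where "t \<in> X" "tr (g - t) X \<subseteq> B" using assms by blast
    then show "g \<in> setadd {c. tr c X \<subseteq> B} X" unfolding setadd_def
      by (intro CollectI exI[of _ "g - t"] exI[of _ t]) auto
  qed
qed

definition badc :: "'a::ab_group_add \<Rightarrow> bool" where
  "badc c \<longleftrightarrow> c \<noteq> 0 \<and> c + c = 0 \<and> (\<exists>x y. x \<notin> {0,c} \<and> y \<notin> {0,c} \<and> x + x \<in> {0,c} \<and> y + y \<in> {0,c} \<and> x - y \<notin> {0,c})"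

definition bad :: "'a::ab_group_add set \<Rightarrow> bool" where
  "bad A \<longleftrightarrow> (\<exists>x y. A = - tr x (stab A) \<and> x \<notin> stab A \<and> y \<notin> stab A \<and> x + x \<in> stab A \<and> y + y \<in> stab A \<and> x - y \<notin> stab A)"

locale ctx =
  fixes f :: "'a::ab_group_add set \<Rightarrow> 'a set"
  assumes fin: "finite (UNIV::'a set)"
    and aut: "P0_automorphism f" and triv: "trivial_pullback f"
    and big: "\<exists>a::'a. a + a \<noteq> 0"
    and uniq: "\<And>c c'::'a. badc c \<Longrightarrow> badc c' \<Longrightarrow> c = c'"
begin

lemma fP0: "0 \<in> A \<Longrightarrow> 0 \<in> f A"
  using aut unfolding P0_automorphism_def bij_betw_def P0_def by blast

lemma finj: "0 \<in> A \<Longrightarrow> 0 \<in> B \<Longrightarrow> f A = f B \<Longrightarrow> A = B"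
  using aut unfolding P0_automorphism_def bij_betw_def inj_on_def P0_def by blast

lemma fsurj: "0 \<in> B \<Longrightarrow> \<exists>A. 0 \<in> A \<and> f A = B"
proof -
  assume "0 \<in> B"
  then have "B \<in> f ` P0" using aut unfolding P0_automorphism_def bij_betw_def P0_def by simp
  then show ?thesis unfolding P0_def by auto
qed

lemma fadd: "0 \<in> A \<Longrightarrow> 0 \<in> B \<Longrightarrow> f (setadd A B) = setadd (f A) (f B)"
  using aut unfolding P0_automorphism_def P0_def by blast

lemma fpair: "f {0,a} = {0,a}"
  using triv unfolding trivial_pullback_def by blast

lemma setadd0: "0 \<in> A \<Longrightarrow> 0 \<in> B \<Longrightarrow> 0 \<in> setadd A B"
  unfolding setadd_def by force

lemma setadd_mem: "a \<in> A \<Longrightarrow> b \<in> B \<Longrightarrow> a + b \<in> setadd A B"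
  unfolding setadd_def by blast

lemma fshift: "0 \<in> A \<Longrightarrow> f (A \<union> tr a A) = f A \<union> tr a (f A)"
  using fadd[of A "{0,a}"] fpair[of a] by (simp add: setadd_pair)

lemma stab_f: assumes "0 \<in> A" shows "stab (f A) = stab A"
proof -
  have "a \<in> stab (f A) \<longleftrightarrow> a \<in> stab A" for a
  proof -
    have "a \<in> stab (f A) \<longleftrightarrow> f (A \<union> tr a A) = f A"
      using fshift[OF assms] pair_stab by metis
    also have "\<dots> \<longleftrightarrow> A \<union> tr a A = A"
      using finj[of "A \<union> tr a A" A] assms by auto
    finally show ?thesis using pair_stab by metis
  qed
  then show ?thesis by blast
qed

lemma fUNIV: "f UNIV = UNIV"
proof -
  have "stab (f UNIV) = UNIV" using stab_f[of UNIV] by (simp add: stab_def)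
  moreover have "0 \<in> f UNIV" using fP0 by simp
  ultimately show ?thesis using stab_mem[of _ "f UNIV" 0] by force
qed

lemma fstab: "f (stab A) = stab A"
proof -
  let ?H = "stab A"
  have "setadd ?H ?H = ?H"
  proof
    show "setadd ?H ?H \<subseteq> ?H" unfolding setadd_def using stab_add by blast
    show "?H \<subseteq> setadd ?H ?H" using setadd_mem[OF _ stab_0] by force
  qed
  then have e: "f ?H = setadd (f ?H) (f ?H)" using fadd[OF stab_0 stab_0] by metis
  have "stab (f ?H) = f ?H"
    by (rule stab_closed) (use fP0[OF stab_0] e setadd_mem in \<open>blast+\<close>)
  then show ?thesis using stab_f[OF stab_0] stab_stab by metis
qed


lemma sneg: "(a::'a) \<in> stab A \<Longrightarrow> -a \<in> stab A" by (rule stab_neg[OF fin])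
lemma sdiff: "(a::'a) \<in> stab A \<Longrightarrow> b \<in> stab A \<Longrightarrow> a - b \<in> stab A" by (rule stab_diff[OF fin])

lemma cos_union:
  assumes A: "(A::'a set) = - tr x (stab A)" and a: "a \<notin> stab A"
  shows "A \<union> tr a A = UNIV"
proof -
  have "z \<in> A \<union> tr a A" for z
  proof (cases "z \<in> A")
    case False
    then have z: "z - x \<in> stab A" using A mem_tr by blast
    have "(z - a) - x \<notin> stab A"
    proof
      assume "(z - a) - x \<in> stab A"
      then have "(z - x) - ((z - a) - x) \<in> stab A" using sdiff z by blast
      then show False using a by simp
    qed
    then have "z - a \<in> A" using A mem_tr by blast
    then show ?thesis using mem_tr by blast
  qed simp
  then show ?thesis by blast
qed

lemma spec_compl:
  assumes nU: "(B::'a set) \<noteq> UNIV" and cov: "\<forall>a. a \<notin> stab B \<longrightarrow> B \<union> tr a B = UNIV"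
  shows "\<exists>y. B = - tr y (stab B)"
proof -
  obtain y where y: "y \<notin> B" using nU by blast
  have "B = - tr y (stab B)"
  proof (intro set_eqI iffI)
    fix b assume b: "b \<in> B"
    show "b \<in> - tr y (stab B)"
    proof
      assume "b \<in> tr y (stab B)"
      then have "b - y \<in> stab B" using mem_tr by blast
      then have "b + - (b - y) \<in> B" using stab_mem sneg b by blast
      then show False using y by simp
    qed
  next
    fix z assume "z \<in> - tr y (stab B)"
    then have z: "z - y \<notin> stab B" using mem_tr by blast
    have "y - z \<notin> stab B" using sneg z by force
    then have "y \<in> B \<union> tr (y - z) B" using cov by blast
    then have "y - (y - z) \<in> B" using y by (simp add: mem_tr)
    then show "z \<in> B" by simp
  qed
  then show ?thesis ..
qed

lemma same_coset: "x - y \<in> stab (A::'a set) \<Longrightarrow> tr x (stab A) = tr y (stab A)"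
proof -
  assume h: "x - y \<in> stab A"
  have "z - x \<in> stab A \<longleftrightarrow> z - y \<in> stab A" for z
  proof
    assume "z - x \<in> stab A" then have "(z - x) + (x - y) \<in> stab A" using stab_add h by blast
    then show "z - y \<in> stab A" by simp
  next
    assume "z - y \<in> stab A" then have "(z - y) - (x - y) \<in> stab A" using sdiff h by blast
    then show "z - x \<in> stab A" by simp
  qed
  then show ?thesis using mem_tr by blast
qed

lemma image_special:
  assumes A0: "0 \<in> A" and Ax: "A = - tr x (stab A)"
  shows "\<exists>y. f A = - tr y (stab A)"
proof -
  have nU: "A \<noteq> UNIV"
  proof
    assume "A = UNIV"
    then have "x \<notin> tr x (stab A)" using Ax by blast
    then show False using mem_tr stab_0 by (metis diff_self)
  qed
  have "f A \<noteq> UNIV" using finj[OF A0, of UNIV] fUNIV nU by auto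
  moreover have "\<forall>a. a \<notin> stab (f A) \<longrightarrow> f A \<union> tr a (f A) = UNIV"
    using fshift[OF A0] cos_union[OF Ax] fUNIV stab_f[OF A0] by metis
  ultimately show ?thesis using spec_compl stab_f[OF A0] by metis
qed

lemma divides_pair:
  assumes Ax: "(A::'a set) = - tr x (stab A)" and yA: "y \<notin> tr x (stab A)" and yy: "y + y \<notin> stab A"
    and A0: "0 \<in> A"
  shows "A = setadd {c. tr c {0,y} \<subseteq> A} {0,y}" and "0 \<in> {c. tr c {0,y} \<subseteq> A}"
proof -
  show "A = setadd {c. tr c {0,y} \<subseteq> A} {0,y}"
  proof (rule divis[symmetric])
    show "0 \<in> {0,y}" by simp
    show "\<forall>g\<in>A. \<exists>t\<in>{0, y}. tr (g - t) {0, y} \<subseteq> A"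
    proof
      fix g assume g: "g \<in> A"
      show "\<exists>t\<in>{0, y}. tr (g - t) {0, y} \<subseteq> A"
      proof (rule ccontr)
        assume "\<not> ?thesis"
        then have "\<not> tr g {0,y} \<subseteq> A" "\<not> tr (g - y) {0,y} \<subseteq> A" by auto
        then have "y + g \<notin> A" "g - y \<notin> A" using g unfolding tr_def by (auto simp: add.commute)
        then have "y + g - x \<in> stab A" "g - y - x \<in> stab A" using Ax mem_tr by blast+
        then have "(y + g - x) - (g - y - x) \<in> stab A" using sdiff by blast
        then show False using yy by (simp add: algebra_simps)
      qed
    qed
  qed
  show "0 \<in> {c. tr c {0,y} \<subseteq> A}" using yA Ax A0 unfolding tr_def by auto
qed

lemma special_case:
  assumes A0: "0 \<in> A" and Ax: "A = - tr x (stab A)"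
    and badcase: "\<And>y. f A = - tr y (stab A) \<Longrightarrow> x \<notin> stab A \<Longrightarrow> y \<notin> stab A \<Longrightarrow>
        x - y \<notin> stab A \<Longrightarrow> x + x \<in> stab A \<Longrightarrow> y + y \<in> stab A \<Longrightarrow> False"
  shows "f A = A"
proof -
  let ?H = "stab A"
  obtain y where By: "f A = - tr y ?H" using image_special[OF A0 Ax] by blast
  have B0: "0 \<in> f A" using fP0[OF A0] .
  have sB: "stab (f A) = ?H" using stab_f[OF A0] .
  have xH: "x \<notin> ?H"
  proof
    assume "x \<in> ?H" then have "0 - x \<in> ?H" using sneg by simp
    then show False using A0 Ax mem_tr by blast
  qed
  have yH: "y \<notin> ?H"
  proof
    assume "y \<in> ?H" then have "0 - y \<in> ?H" using sneg by simp
    then show False using B0 By mem_tr by blast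
  qed
  show ?thesis
  proof (cases "x - y \<in> ?H")
    case True
    then show ?thesis using By Ax same_coset by metis
  next
    case False
    have yx: "y - x \<notin> ?H" using False sneg by force
    show ?thesis
    proof (cases "x + x \<in> ?H")
      case xx: False
      have By': "f A = - tr y (stab (f A))" using By sB by simp
      have xB: "x \<notin> tr y (stab (f A))" using False mem_tr sB by metis
      have C: "f A = setadd {c. tr c {0,x} \<subseteq> f A} {0,x}" "0 \<in> {c. tr c {0,x} \<subseteq> f A}"
        using divides_pair[OF By' xB _ B0] xx sB by auto
      obtain D where D: "0 \<in> D" "f D = {c. tr c {0,x} \<subseteq> f A}" using fsurj[OF C(2)] by blast
      have "f A = f (setadd D {0,x})" using C(1) fadd[OF D(1), of "{0,x}"] fpair D(2) by simp
      then have AD: "A = setadd D {0,x}" using finj[OF A0 setadd0[OF D(1)]] by simp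
      have "0 + x \<in> setadd D {0,x}" by (rule setadd_mem[OF D(1)]) simp
      then have "x \<in> A" using AD by simp
      moreover have "x \<in> tr x ?H" by (simp add: mem_tr stab_0)
      ultimately show ?thesis using Ax by blast
    next
      case xx: True
      show ?thesis
      proof (cases "y + y \<in> ?H")
        case yy: False
        have yA: "y \<notin> tr x ?H" using yx mem_tr by metis
        have C: "A = setadd {c. tr c {0,y} \<subseteq> A} {0,y}" "0 \<in> {c. tr c {0,y} \<subseteq> A}"
          using divides_pair[OF Ax yA yy A0] by auto
        have "f A = f (setadd {c. tr c {0,y} \<subseteq> A} {0,y})" using arg_cong[OF C(1), of f] .
        also have "\<dots> = setadd (f {c. tr c {0,y} \<subseteq> A}) {0,y}"
          using fadd[OF C(2), of "{0,y}"] fpair by simp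
        finally have "f A = setadd (f {c. tr c {0,y} \<subseteq> A}) {0,y}" .
        moreover have "0 + y \<in> setadd (f {c. tr c {0,y} \<subseteq> A}) {0,y}"
          by (rule setadd_mem[OF fP0[OF C(2)]]) simp
        ultimately have "y \<in> f A" by simp
        moreover have "y \<in> tr y ?H" by (simp add: mem_tr stab_0)
        ultimately show ?thesis using By by blast
      next
        case yy: True
        show ?thesis using badcase[OF By xH yH False xx yy] ..
      qed
    qed
  qed
qed

lemma card_tr: "card (tr x (H::'a set)) = card H"
  unfolding tr_def by (rule card_image) (auto simp: inj_on_def)

lemma step1:
  assumes A0: "0 \<in> A" and nb: "\<not> bad A"
    and IH: "\<And>C. 0 \<in> C \<Longrightarrow> card A < card C \<Longrightarrow> f C = C"
  shows "f A = A"
proof (cases "A = UNIV")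
  case True then show ?thesis using fUNIV by simp
next
  case nU: False
  let ?H = "stab A"
  let ?B = "f A"
  have sB: "stab ?B = ?H" using stab_f[OF A0] .
  have F1: "?B \<union> tr a ?B = A \<union> tr a A" if a: "a \<notin> ?H" for a
  proof -
    have "A \<subset> A \<union> tr a A" using a pair_stab by blast
    then have "card A < card (A \<union> tr a A)" by (rule psubset_card_mono[OF finite_subset[OF subset_UNIV fin]])
    then have "f (A \<union> tr a A) = A \<union> tr a A" using IH A0 by blast
    then show ?thesis using fshift[OF A0] by simp
  qed
  show ?thesis
  proof (cases "\<exists>x. A = - tr x ?H")
    case True
    then obtain x where Ax: "A = - tr x ?H" by blast
    show ?thesis
    proof (rule special_case[OF A0 Ax])
      fix y assume "f A = - tr y ?H" "x \<notin> ?H" "y \<notin> ?H" "x - y \<notin> ?H" "x + x \<in> ?H" "y + y \<in> ?H"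
      then have "bad A" unfolding bad_def using Ax by blast
      then show False using nb by blast
    qed
  next
    case nsp: False
    have BA: "?B \<subseteq> A"
    proof
      fix z assume zB: "z \<in> ?B"
      show "z \<in> A"
      proof (rule ccontr)
        assume zA: "z \<notin> A"
        have za: "z - a \<in> A" if "a \<notin> ?H" for a
          using F1[OF that] zB zA mem_tr by blast
        have "A = - tr z ?H"
        proof (intro set_eqI iffI)
          fix w assume wA: "w \<in> A"
          show "w \<in> - tr z ?H"
          proof
            assume "w \<in> tr z ?H"
            then have "w - z \<in> ?H" using mem_tr by blast
            then have "w + - (w - z) \<in> A" using stab_mem sneg wA by blast
            then show False using zA by simp
          qed
        next
          fix w assume "w \<in> - tr z ?H"
          then have "w - z \<notin> ?H" using mem_tr by blast
          then have "z - w \<notin> ?H" using sneg by force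
          then show "w \<in> A" using za by force
        qed
        then show False using nsp by blast
      qed
    qed
    have "A \<subseteq> ?B"
    proof
      fix c assume cA: "c \<in> A"
      show "c \<in> ?B"
      proof (rule ccontr)
        assume cB: "c \<notin> ?B"
        have ca: "c - a \<in> A" if "a \<notin> ?H" for a
          using F1[OF that] cA cB mem_tr BA by blast
        have "w \<in> A" for w
        proof (cases "w - c \<in> ?H")
          case True
          then have "c + (w - c) \<in> A" using stab_mem cA by blast
          then show ?thesis by simp
        next
          case False
          then have "c - w \<notin> ?H" using sneg by force
          then show ?thesis using ca by force
        qed
        then show False using nU by blast
      qed
    qed
    then show ?thesis using BA by blast
  qed
qed

lemma card_compl: "card (- (S::'a set)) = card (UNIV::'a set) - card S"
proof -
  have "finite S" by (rule finite_subset[OF subset_UNIV fin])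
  then show ?thesis by (simp add: Compl_eq_Diff_UNIV card_Diff_subset)
qed

lemma bad_badc:
  assumes "bad (A::'a set)" "card (stab A) = 2"
  shows "\<exists>c. stab A = {0,c} \<and> badc c"
proof -
  obtain u v where uv: "stab A = {u,v}" "u \<noteq> v" using assms(2) card_2_iff by metis
  then obtain c where c: "stab A = {0,c}" "c \<noteq> 0" using stab_0[of A] by auto
  have "c + c \<in> stab A" using stab_add c by blast
  then have cc: "c + c = 0" using c by auto
  from assms(1) obtain x y where "x \<notin> stab A" "y \<notin> stab A" "x + x \<in> stab A" "y + y \<in> stab A" "x - y \<notin> stab A"
    unfolding bad_def by blast
  then have "badc c" unfolding badc_def using c cc by blast
  then show ?thesis using c by blast
qed

lemma C1:
  assumes A0: "0 \<in> A" and Ax: "A = - {x}" and By: "f A = - {y}"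
    and x0: "x \<noteq> 0" and y0: "y \<noteq> 0" and xy: "x \<noteq> y" and xx: "x + x = 0" and yy: "y + y = 0"
  shows False
proof -
  obtain a :: 'a where aa: "a + a \<noteq> 0" using big by blast
  define X where "X = setadd {0,a} {0,y-a}"
  have fX: "f X = X" unfolding X_def using fadd[of "{0,a}" "{0,y-a}"] fpair by simp
  have Xe: "X = {0,a,y-a,y}"
  proof
    show "X \<subseteq> {0,a,y-a,y}" unfolding X_def setadd_def by auto
    show "{0,a,y-a,y} \<subseteq> X" unfolding X_def
      using setadd_mem[of 0 "{0,a}" 0 "{0,y-a}"] setadd_mem[of a "{0,a}" 0 "{0,y-a}"]
        setadd_mem[of 0 "{0,a}" "y-a" "{0,y-a}"] setadd_mem[of a "{0,a}" "y-a" "{0,y-a}"] by simp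
  qed
  have ny: "-y = y" using yy by (simp add: add_eq_0_iff)
  have a0: "a \<noteq> 0" using aa by auto
  have ay: "a \<noteq> y" using aa yy by auto
  have ya: "y + a \<notin> X"
  proof
    assume "y + a \<in> X"
    then consider "y + a = 0" | "y + a = a" | "y + a = y - a" | "y + a = y" using Xe by blast
    then show False
    proof cases
      case 1 then have "a = - y" by (simp add: add_eq_0_iff add.commute)
      then show False using ny ay by simp
    next
      case 2 then show False using y0 by simp
    next
      case 3 then show False using aa by (simp add: algebra_simps)
    next
      case 4 then show False using a0 by simp
    qed
  qed
  have stX: "s = 0" if s: "s \<in> stab X" for s
  proof -
    have "0 + s \<in> X" using stab_mem[OF s] Xe by blast
    then consider "s = 0" | "s = a" | "s = y - a" | "s = y" using Xe by auto
    then show ?thesis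
    proof cases
      case 2
      have "y + s \<in> X" using stab_mem[OF s] Xe by blast
      then show ?thesis using ya 2 by simp
    next
      case 4
      have "a + s \<in> X" using stab_mem[OF s] Xe by blast
      then show ?thesis using ya 4 by (simp add: add.commute)
    next
      case 3
      have "y + s \<in> X" using stab_mem[OF s] Xe by blast
      then have "y + (y - a) \<in> X" using 3 by simp
      moreover have "y + (y - a) = - a" using yy by (simp add: algebra_simps)
      ultimately have na: "- a \<in> X" by simp
      then consider "- a = 0" | "-a = a" | "-a = y - a" | "-a = y" using Xe by blast
      then show ?thesis
      proof cases
        case 1 then show ?thesis using a0 by simp
      next
        case 2 then show ?thesis using aa by (simp add: neg_eq_iff_add_eq_0)
      next
        case 3 then show ?thesis using y0 by simp
      next
        case 4 then show ?thesis using ay ny by (metis minus_minus)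
      qed
    qed simp
  qed
  have xX: "x \<notin> X"
  proof
    assume "x \<in> X"
    then consider "x = 0" | "x = a" | "x = y - a" | "x = y" using Xe by blast
    then show False
    proof cases
      case 2 then show False using xx aa by simp
    next
      case 3
      then have "a = y - x" by (simp add: algebra_simps)
      then have "a + a = (y + y) - (x + x)" by (simp add: algebra_simps)
      then show False using aa xx yy by simp
    qed (use x0 xy in auto)
  qed
  let ?C = "{c. tr c X \<subseteq> A}"
  have C0: "0 \<in> ?C" using xX Ax unfolding tr_def by auto
  have AC: "setadd ?C X = A"
  proof (rule divis)
    show "0 \<in> X" using Xe by simp
    show "\<forall>g\<in>A. \<exists>t\<in>X. tr (g - t) X \<subseteq> A"
    proof
      fix g assume gA: "g \<in> A"
      show "\<exists>t\<in>X. tr (g - t) X \<subseteq> A"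
      proof (rule ccontr)
        assume "\<not> ?thesis"
        then have h: "\<forall>t\<in>X. x - (g - t) \<in> X" using Ax mem_tr by blast
        have "x - g \<in> stab X" unfolding stab_def
        proof (intro CollectI ballI)
          fix t assume "t \<in> X"
          then have "x - (g - t) \<in> X" using h by blast
          then show "t + (x - g) \<in> X" by (simp add: algebra_simps)
        qed
        then have "x - g = 0" using stX by blast
        then show False using gA Ax by simp
      qed
    qed
  qed
  have "f A = setadd (f ?C) X" using fadd[OF C0, of X] fX AC Xe by simp
  then have "0 + y \<in> f A" using setadd_mem[OF fP0[OF C0], of y X] Xe by simp
  then show False using By by simp
qed

lemma step_bad:
  assumes A0: "0 \<in> A" and bA: "bad A"
    and IH: "\<And>C. 0 \<in> C \<Longrightarrow> card A < card C \<Longrightarrow> f C = C"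
  shows "f A = A"
proof -
  let ?H = "stab A"
  let ?n = "card (UNIV::'a set)"
  obtain x where Ax: "A = - tr x ?H" using bA unfolding bad_def by blast
  show ?thesis
  proof (rule special_case[OF A0 Ax])
    fix y assume By: "f A = - tr y ?H" and xH: "x \<notin> ?H" and yH: "y \<notin> ?H"
      and xy: "x - y \<notin> ?H" and xx: "x + x \<in> ?H" and yy: "y + y \<in> ?H"
    show False
    proof (cases "?H = {0}")
      case True
      have t0: "tr z {0} = {z}" for z :: 'a unfolding tr_def by simp
      show False
        by (rule C1[OF A0, of x y]) (use Ax By True t0 xH yH xy xx yy in auto)
    next
      case False
      obtain h0 where h0: "h0 \<in> ?H" "h0 \<noteq> 0" using False stab_0[of A] by blast
      define g where "g = y + h0"
      have yx: "y - x \<notin> ?H" using xy sneg by force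
      have yA: "y \<in> A" using Ax yx mem_tr by blast
      have gA: "g \<in> A"
      proof -
        have "g - x \<notin> ?H"
        proof
          assume "g - x \<in> ?H"
          then have "(g - x) - h0 \<in> ?H" using sdiff h0 by blast
          then show False using yx unfolding g_def by (simp add: algebra_simps)
        qed
        then show ?thesis using Ax mem_tr by blast
      qed
      have gy: "g \<noteq> y" using h0 unfolding g_def by simp
      have y0: "y \<noteq> 0" using yH stab_0 by metis
      define D where "D = A - {y}"
      have D0: "0 \<in> D" using A0 y0 D_def by blast
      have gD: "g \<in> D" using gA gy D_def by blast
      have DH: "setadd D ?H = A"
      proof
        show "setadd D ?H \<subseteq> A" unfolding setadd_def D_def using stab_mem by blast
        show "A \<subseteq> setadd D ?H"
        proof
          fix a assume aA: "a \<in> A"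
          show "a \<in> setadd D ?H"
          proof (cases "a = y")
            case True
            have "g + - h0 \<in> setadd D ?H" using setadd_mem[OF gD sneg[OF h0(1)]] .
            then show ?thesis using True g_def by simp
          next
            case False
            then have "a \<in> D" using aA D_def by blast
            then have "a + 0 \<in> setadd D ?H" by (rule setadd_mem[OF _ stab_0])
            then show ?thesis by simp
          qed
        qed
      qed
      define E where "E = f D"
      have BE: "f A = setadd E ?H" using fadd[OF D0 stab_0, of A] fstab DH E_def by simp
      have EB: "E \<subseteq> f A"
      proof
        fix e assume "e \<in> E"
        then have "e + 0 \<in> f A" using BE setadd_mem stab_0 by metis
        then show "e \<in> f A" by simp
      qed
      have "g \<in> tr y ?H" using h0 unfolding g_def by (simp add: mem_tr)
      then have gB: "g \<notin> f A" using By by blast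
      have cardH2: "2 \<le> card ?H"
      proof -
        have "{0,h0} \<subseteq> ?H" using h0 stab_0 by blast
        moreover have "finite ?H" by (rule finite_subset[OF subset_UNIV fin])
        ultimately have "card {0,h0} \<le> card ?H" by (rule card_mono[rotated])
        then show ?thesis using h0 by simp
      qed
      have Hn: "card ?H \<le> ?n" using fin by (simp add: card_mono)
      have cardA: "card A = ?n - card ?H" using Ax card_compl card_tr by metis
      have U: "f (D \<union> tr c D) = D \<union> tr c D" if cH: "c \<notin> ?H" for c
      proof -
        let ?U = "D \<union> tr c D"
        have U0: "0 \<in> ?U" using D0 by blast
        have c0: "c \<noteq> 0" using cH stab_0 by metis
        have sub: "- {y, y + c} \<subseteq> ?U"
        proof
          fix z assume z: "z \<in> - {y, y + c}"
          show "z \<in> ?U"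
          proof (cases "z \<in> A")
            case True then show ?thesis using z D_def by blast
          next
            case False
            then have zx: "z - x \<in> ?H" using Ax mem_tr by blast
            have "z - c - x \<notin> ?H"
            proof
              assume "z - c - x \<in> ?H"
              then have "(z - x) - (z - c - x) \<in> ?H" using sdiff zx by blast
              then show False using cH by simp
            qed
            then have "z - c \<in> A" using Ax mem_tr by blast
            moreover have "z - c \<noteq> y" using z by auto
            ultimately have "z - c \<in> D" using D_def by blast
            then show ?thesis using mem_tr by blast
          qed
        qed
        have finU: "finite ?U" by (rule finite_subset[OF subset_UNIV fin])
        have yyc: "y \<noteq> y + c" using c0 by simp
        have cs: "card (- {y, y + c}) = ?n - 2" using card_compl[of "{y, y+c}"] yyc by simp
        have cU: "?n - 2 \<le> card ?U" using card_mono[OF finU sub] cs by simp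
        show ?thesis
        proof (cases "card A < card ?U")
          case True then show ?thesis using IH U0 by blast
        next
          case False
          then have H2: "card ?H = 2" and cU2: "card ?U = ?n - 2"
            using cU cardA cardH2 Hn by linarith+
          have Ueq: "?U = - {y, y + c}"
            using card_subset_eq[OF finU sub] cs cU2 by simp
          show ?thesis
          proof (cases "bad ?U")
            case False
            show ?thesis
              by (rule step1[OF U0 False]) (use IH cU2 cardA H2 in auto)
          next
            case True
            obtain x' where Ux: "?U = - tr x' (stab ?U)" using True unfolding bad_def by blast
            have "card ?U = ?n - card (stab ?U)" using Ux card_compl card_tr by metis
            moreover have "card (stab ?U) \<le> ?n" using fin by (simp add: card_mono)
            ultimately have HU2: "card (stab ?U) = 2" using cU2 H2 Hn by linarith
            obtain c1 where c1: "stab ?U = {0,c1}" "badc c1" using bad_badc[OF True HU2] by blast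
            obtain c2 where c2: "?H = {0,c2}" "badc c2" using bad_badc[OF bA H2] by blast
            have "stab ?U = ?H" using c1 c2 uniq by metis
            then have "g + - h0 \<in> ?U" using stab_mem sneg h0(1) gD by blast
            then have "y \<in> ?U" using g_def by simp
            then show ?thesis using Ueq by blast
          qed
        qed
      qed
      have "f A \<subseteq> E"
      proof
        fix z assume zB: "z \<in> f A"
        then have "z - y \<notin> ?H" using By mem_tr by blast
        then have gz: "g - z \<notin> ?H"
        proof (rule contrapos_nn)
          assume "g - z \<in> ?H"
          then have "h0 - (g - z) \<in> ?H" using sdiff h0 by blast
          then show "z - y \<in> ?H" unfolding g_def by (simp add: algebra_simps)
        qed
        have "g \<in> E \<union> tr (g - z) E" using U[OF gz] fshift[OF D0] gD E_def by blast
        then have "g - (g - z) \<in> E" using gB EB mem_tr by blast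
        then show "z \<in> E" by simp
      qed
      then have "f D = f A" using EB E_def by blast
      then have "D = A" using finj[OF D0 A0] by blast
      then show False using yA D_def by blast
    qed
  qed
qed

theorem all_fixed: "0 \<in> A \<Longrightarrow> f A = A"
proof (induction "card (UNIV::'a set) - card A" arbitrary: A rule: less_induct)
  case less
  have IH: "f C = C" if "0 \<in> C" "card A < card C" for C
  proof -
    have "card C \<le> card (UNIV::'a set)" using fin by (simp add: card_mono)
    then have "card (UNIV::'a set) - card C < card (UNIV::'a set) - card A" using that by linarith
    then show ?thesis using less.hyps that by blast
  qed
  show ?case
  proof (cases "bad A")
    case True then show ?thesis using step_bad[OF less.prems True IH] by blast
  next
    case False then show ?thesis using step1[OF less.prems False IH] by blast
  qed
qed
end


lemma arith_v4:
  fixes p x1 y1 x2 y2 c2 :: nat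
  assumes "p \<ge> 2" "x1 < 2" "y1 < 2" "x2 \<in> {0,p}" "y2 \<in> {0,p}" "c2 \<in> {0,p}"
    "(x1,x2) \<noteq> (0,0)" "(x1,x2) \<noteq> (1,c2)" "(y1,y2) \<noteq> (0,0)" "(y1,y2) \<noteq> (1,c2)"
    "((x1+y1) mod 2, (x2+y2) mod (2*p)) \<noteq> (0,0)" "((x1+y1) mod 2, (x2+y2) mod (2*p)) \<noteq> (1,c2)"
  shows False
proof -
  have a: "(p + p) mod (2*p) = 0" by (simp add: mult_2)
  have b: "p mod (2*p) = p" using assms(1) by simp
  have x1: "x1 = 0 \<or> x1 = 1" and y1: "y1 = 0 \<or> y1 = 1" using assms(2,3) by auto
  show False using x1 y1 assms(4-12) a b assms(1) by auto
qed

lemma arith_inv: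
  fixes p c :: nat
  assumes "p \<ge> 2" "c < 2*p" "(c + c) mod (2*p) = 0"
  shows "c = 0 \<or> c = p"
proof -
  have "2*p dvd 2*c" using assms(3) by (simp add: mult_2 mod_eq_0_iff_dvd)
  then have "p dvd c" by simp
  then obtain k where "c = p * k" by blast
  moreover have "p * k < p * 2" using assms(2) \<open>c = p * k\<close> by (simp add: mult.commute)
  then have "k < 2" using assms(1) by simp
  then have "k = 0 \<or> k = 1" by auto
  ultimately show ?thesis by auto
qed

lemma concrete:
  fixes h :: "'a::ab_group_add \<Rightarrow> nat \<times> nat" and p :: nat
  assumes p: "prime p" and iso: "iso_to_CmCn 2 (2*p) h"
  shows "finite (UNIV::'a set)" "\<exists>a::'a. a + a \<noteq> 0" "\<And>c c'::'a. badc c \<Longrightarrow> badc c' \<Longrightarrow> c = c'"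
proof -
  have bij: "bij_betw h UNIV ({0..<2} \<times> {0..<2*p})"
    and hom: "\<And>x y. h (x + y) = ((fst (h x) + fst (h y)) mod 2, (snd (h x) + snd (h y)) mod (2*p))"
    using iso unfolding iso_to_CmCn_def by auto
  have p2: "p \<ge> 2" using p prime_ge_2_nat by blast
  show "finite (UNIV::'a set)" using bij_betw_finite[OF bij] by simp
  have inj: "h x = h y \<Longrightarrow> x = y" for x y using bij unfolding bij_betw_def inj_on_def by blast
  have hx: "h x \<in> {0..<2} \<times> {0..<2*p}" for x using bij_betwE[OF bij] by blast
  have rng: "fst (h x) < 2" "snd (h x) < 2*p" for x using hx[of x] by (auto simp: mem_Times_iff)
  have surj: "\<exists>x. h x = (u,v)" if "u < 2" "v < 2*p" for u v
  proof -
    have "(u,v) \<in> h ` UNIV" using bij that unfolding bij_betw_def by auto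
    then show ?thesis by auto
  qed
  have h0: "h 0 = (0,0)"
  proof -
    have e: "h 0 = ((fst (h 0) + fst (h 0)) mod 2, (snd (h 0) + snd (h 0)) mod (2*p))"
      using hom[of 0 0] by simp
    have "fst (h 0) = 0"
    proof -
      have "fst (h 0) = (fst (h 0) + fst (h 0)) mod 2" using e by (metis fst_conv)
      then show ?thesis using rng(1)[of 0] by (metis add_self_mod_2 One_nat_def less_2_cases zero_neq_one)
    qed
    moreover have "snd (h 0) = 0"
    proof -
      let ?b = "snd (h 0)"
      have eb: "?b = (?b + ?b) mod (2*p)" using e by (metis snd_conv)
      show ?thesis
      proof (cases "?b + ?b < 2*p")
        case True then show ?thesis using eb by simp
      next
        case False
        then have "(?b + ?b) mod (2*p) = ?b + ?b - 2*p" using rng(2)[of 0] le_mod_geq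
          by (simp add: le_mod_geq)
        then show ?thesis using eb rng(2)[of 0] by linarith
      qed
    qed
    ultimately show ?thesis by (metis prod.collapse)
  qed
  show "\<exists>a::'a. a + a \<noteq> 0"
  proof -
    obtain a where a: "h a = (0,1)" using surj[of 0 1] p2 by auto
    have m: "(2::nat) mod (2*p) = 2" by (rule mod_less) (use p2 in linarith)
    have "snd (h (a + a)) = (snd (h a) + snd (h a)) mod (2*p)" using hom[of a a] by simp
    also have "\<dots> = 2" by (simp only: a snd_conv one_add_one m)
    finally have "h (a + a) \<noteq> h 0" using h0 by auto
    then show ?thesis by metis
  qed
  have key: "h c = (0,p)" if bc: "badc c" for c :: 'a
  proof -
    obtain x y where c0: "c \<noteq> 0" and cc: "c + c = 0" and xs: "x \<notin> {0,c}" "y \<notin> {0,c}"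
      "x + x \<in> {0,c}" "y + y \<in> {0,c}" "x - y \<notin> {0,c}"
      using bc unfolding badc_def by blast
    obtain c1 c2 where hc: "h c = (c1,c2)" by fastforce
    have c1: "c1 < 2" "c2 < 2*p" using rng[of c] hc by auto
    have "h (c + c) = (0,0)" using cc h0 by simp
    then have "(c2 + c2) mod (2*p) = 0" using hom[of c c] hc by simp
    then have c2: "c2 = 0 \<or> c2 = p" by (rule arith_inv[OF p2 c1(2)])
    have hc0: "h c \<noteq> (0,0)" using c0 h0 inj by metis
    show ?thesis
    proof (cases "c1 = 0")
      case True then show ?thesis using hc hc0 c2 by auto
    next
      case False
      then have c11: "c1 = 1" using c1 by auto
      have inv2: "z + z = 0" if "z + z \<in> {0,c}" for z :: 'a
      proof -
        have "fst (h (z + z)) = 0" using hom[of z z] by (simp add: add_self_mod_2 flip: mult_2)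
        then have "z + z \<noteq> c" using hc c11 by auto
        then show ?thesis using that by blast
      qed
      have coord2: "snd (h z) \<in> {0,p}" if "z + z = 0" for z :: 'a
      proof -
        have "h (z + z) = (0,0)" using that h0 by simp
        then have "(snd (h z) + snd (h z)) mod (2*p) = 0" using hom[of z z] by simp
        then have "snd (h z) = 0 \<or> snd (h z) = p" by (rule arith_inv[OF p2 rng(2)[of z]])
        then show ?thesis by simp
      qed
      have xx: "x + x = 0" and yy: "y + y = 0" using inv2 xs by auto
      have xmy: "x - y = x + y"
      proof -
        have "- y = y" using yy by (simp add: add_eq_0_iff)
        then show ?thesis by (metis diff_conv_add_uminus)
      qed
      have ne: "h x \<noteq> (0,0)" "h x \<noteq> h c" "h y \<noteq> (0,0)" "h y \<noteq> h c"
        "h (x + y) \<noteq> (0,0)" "h (x + y) \<noteq> h c"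
        using xs xmy h0 inj by (metis insertCI)+
      show ?thesis
        using arith_v4[OF p2 rng(1)[of x] rng(1)[of y] coord2[OF xx] coord2[OF yy], of c2]
          c2 ne hom[of x y] hc c11 by (auto simp: prod_eq_iff)
    qed
  qed
  show "c = c'" if "badc c" "badc c'" for c c' :: 'a
    using key[OF that(1)] key[OF that(2)] inj by metis
qed

theorem lemma3p6:
  fixes p :: nat and f :: "'a::ab_group_add set \<Rightarrow> 'a set"
  assumes "prime p"
    and "\<exists>h::'a \<Rightarrow> nat \<times> nat. iso_to_CmCn 2 (2 * p) h"
    and "P0_automorphism f"
    and "trivial_pullback f"
  shows "\<forall>A\<in>P0. f A = A"
proof -
  obtain h :: "'a \<Rightarrow> nat \<times> nat" where h: "iso_to_CmCn 2 (2 * p) h" using assms(2) by blast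
  note c = concrete[OF assms(1) h]
  interpret ctx f
  proof
    show "finite (UNIV::'a set)" by (rule c(1))
    show "P0_automorphism f" by (rule assms(3))
    show "trivial_pullback f" by (rule assms(4))
    show "\<exists>a::'a. a + a \<noteq> 0" by (rule c(2))
    show "\<And>c c'::'a. badc c \<Longrightarrow> badc c' \<Longrightarrow> c = c'" by (rule c(3))
  qed
  show ?thesis using all_fixed unfolding P0_def by blast
qed

end
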